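(* Suppose UBEV-S (described in the context) is run on a contextual-bandit MDP $\mathcal M_C$, i.e. an episodic MDP whose transition probabilities satisfy $p(s'\mid s,a)=\mu(s')$ for all $s,a,s'$, for a fixed distribution $\mu$ over states. Then outside of the failure event, for every episode $k$ and timestep $t$, $$\mathrm{rng}\,\tilde V^{\pi_k}_t\le 1+\tilde O\!\left(\frac{H\sqrt S}{\sqrt{\min_{(s',t')}n_k(s',\pi_k(s',t'))}}\right).$$
   Context: Setting: a finite-horizon episodic MDP with finite state set $\mathcal S$ ($|\mathcal S|=S$), finite action set $\mathcal A$ ($|\mathcal A|=A$), horizon $H$, stationary transitions $p(s'\mid s,a)$ and mean rewards $r(s,a)\in[0,1]$ (observed rewards in $[0,1]$). Episodes $k=1,2,\dots$ each have $H$ steps. For a vector $V$, $\mathrm{rng}\,V=\max_sV(s)-\min_sV(s)$. $V^*_t$ denotes the optimal value function at timestep $t$. $\tilde O(\cdot)$ hides constants and factors polylogarithmic in quantities polynomial in $S,A,T,K,H,1/\delta$. Algorithm UBEV-S (input $\delta$): maintain, aggregated over all timesteps of all past episodes, counts $n(s,a)$, reward sums $l(s,a)$, transition counts $m(s',s,a)$ (initially $0$), and a scalar $\phi^+$ initialized to $0$ once. At the start of each episode, set $\tilde V_{H+1}\equiv0$ and for $t=H,\dots,1$ and each $s$: for each $a$, $\phi(s,a)=\sqrt{(2\ln\ln(\max\{e,n(s,a)\})+\ln(27HSA/\delta))/n(s,a)}$, $\hat r(s,a)=l(s,a)/n(s,a)$, $\hat p(s,a)=m(\cdot,s,a)/n(s,a)$,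 $Q(a)=\min\{1,\hat r+\phi\}+\min\{\max_{s'}\tilde V_{t+1}(s'),\hat p(s,a)^\top\tilde V_{t+1}+\min\{H-t,\mathrm{rng}\,\tilde V_{t+1}+\phi^+\}\phi(s,a)\}$; set $\pi_k(s,t)=\arg\max_aQ(a)$, $\tilde V_t(s)=Q(\pi_k(s,t))$, $\phi^+\leftarrow\max\{4\sqrt SH^2\phi(s,\pi_k(s,t)),\phi^+\}$. Then execute $\pi_k$ for $H$ steps and update the counts. In episode $k$: $n_k(s,a)$, $\hat r_k$, $\hat p_k$, $\phi_k$ are the quantities at the start of the episode and $\tilde V^{\pi_k}_t$ is the vector $\tilde V_t$ computed in episode $k$. Failure event: let $w_{tk}(s,a)$ be the probability, in episode $k$ under $\pi_k$, of being in $s$ at step $t$ and taking $a$. "Outside of the failure event" means that for all episodes $k$, timesteps $t$ and pairs $(s,a)$ the concentration inequalities used by the algorithm hold, in particular: $n_k(s,a)\ge\frac12\sum_{i<k}\sum_{t\in[H]}w_{ti}(s,a)-H\ln\frac{9SA}{\delta}$; $|\hat r_k(s,a)-r(s,a)|\le\phi_k(s,a)$; $|(\hat p_k(s,a)-p(\cdot\mid s,a))^\top V^*_{t+1}|\le(\mathrm{rng}\,V^*_{t+1})\phi_k(s,a)$; and $\|\hat p_k(s,a)-p(\cdot\mid s,a)\|_1\le4\sqrt S\,\phi_k(s,a)$ (so in particular $\|\hat p_k(s,a)-p(\cdot\mid s,a)\|_1=\tilde O(\sqrt{S/n_k(s,a)})$). *)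

theory Defs
  imports Complex_Main "HOL-Library.Extended_Real"
begin

(* States are {..<S}, actions are {..<A} (natural numbers), timesteps 1..H.
   Episodes are indexed k = 0,1,2,... (the paper's episode k+1). *)

definition maxV :: "nat \<Rightarrow> (nat \<Rightarrow> real) \<Rightarrow> real" where
  "maxV S V = Max (V ` {..<S})"

definition rng :: "nat \<Rightarrow> (nat \<Rightarrow> real) \<Rightarrow> real" where
  "rng S V = Max (V ` {..<S}) - Min (V ` {..<S})"

definition phi :: "real \<Rightarrow> nat \<Rightarrow> nat \<Rightarrow> nat \<Rightarrow> nat \<Rightarrow> real" where
  "phi \<delta> H S A n =
     sqrt ((2 * ln (ln (max (exp 1) (real n))) + ln (27 * real H * real S * real A / \<delta>)) / real n)"

definition phiE :: "real \<Rightarrow> nat \<Rightarrow> nat \<Rightarrow> nat \<Rightarrow> nat \<Rightarrow> ereal" where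
  "phiE \<delta> H S A n =
     (if n = 0 then \<infinity> else ereal (4 * sqrt (real S) * (real H)^2 * phi \<delta> H S A n))"

(* Q(a) at timestep t, state s, given counts n (s a), reward sums l (s a),
   transition counts m (s' s a), current phi^+ and Vn = tilde V_{t+1}. *)
definition Qval :: "real \<Rightarrow> nat \<Rightarrow> nat \<Rightarrow> nat \<Rightarrow> (nat \<Rightarrow> nat \<Rightarrow> nat) \<Rightarrow> (nat \<Rightarrow> nat \<Rightarrow> real)
     \<Rightarrow> (nat \<Rightarrow> nat \<Rightarrow> nat \<Rightarrow> nat) \<Rightarrow> ereal \<Rightarrow> (nat \<Rightarrow> real) \<Rightarrow> nat \<Rightarrow> nat \<Rightarrow> nat \<Rightarrow> real" where
  "Qval \<delta> H S A n l m \<phi>p Vn t s a =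
    (if n s a = 0 then 1 + maxV S Vn
     else (let \<phi> = phi \<delta> H S A (n s a);
               rh = l s a / real (n s a);
               ph = (\<lambda>s'. real (m s' s a) / real (n s a))
           in min 1 (rh + \<phi>)
              + min (maxV S Vn)
                    ((\<Sum>s'<S. ph s' * Vn s')
                     + real_of_ereal (min (ereal (real H - real t)) (ereal (rng S Vn) + \<phi>p)) * \<phi>)))"

type_synonym alg_state = "(nat \<Rightarrow> nat \<Rightarrow> real) \<times> (nat \<Rightarrow> nat \<Rightarrow> nat) \<times> ereal"
  (* (tilde V indexed t s, policy indexed s t, phi^+) *)

(* processing of one pair (t,s); tb k t s Q is the argmax (tie-breaking rule) *)
definition alg_step :: "real \<Rightarrow> nat \<Rightarrow> nat \<Rightarrow> nat \<Rightarrow> (nat \<Rightarrow> nat \<Rightarrow> nat) \<Rightarrow> (nat \<Rightarrow> nat \<Rightarrow> real)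
     \<Rightarrow> (nat \<Rightarrow> nat \<Rightarrow> nat \<Rightarrow> nat) \<Rightarrow> (nat \<Rightarrow> nat \<Rightarrow> (nat \<Rightarrow> real) \<Rightarrow> nat)
     \<Rightarrow> nat \<times> nat \<Rightarrow> alg_state \<Rightarrow> alg_state" where
  "alg_step \<delta> H S A n l m tb ts st =
    (case ts of (t, s) \<Rightarrow> (case st of (V, \<pi>, \<phi>p) \<Rightarrow>
      (let Q = Qval \<delta> H S A n l m \<phi>p (V (t+1)) t s;
           a = tb t s Q
       in (V(t := (V t)(s := Q a)), \<pi>(s := (\<pi> s)(t := a)), max (phiE \<delta> H S A (n s a)) \<phi>p))))"

definition alg_order :: "nat \<Rightarrow> nat list \<Rightarrow> (nat \<times> nat) list" where
  "alg_order H sl = concat (map (\<lambda>t. map (\<lambda>s. (t, s)) sl) (rev [1..<H+1]))"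

definition run_episode :: "real \<Rightarrow> nat \<Rightarrow> nat \<Rightarrow> nat \<Rightarrow> nat list \<Rightarrow> (nat \<Rightarrow> nat \<Rightarrow> nat) \<Rightarrow> (nat \<Rightarrow> nat \<Rightarrow> real)
     \<Rightarrow> (nat \<Rightarrow> nat \<Rightarrow> nat \<Rightarrow> nat) \<Rightarrow> (nat \<Rightarrow> nat \<Rightarrow> (nat \<Rightarrow> real) \<Rightarrow> nat) \<Rightarrow> ereal \<Rightarrow> alg_state" where
  "run_episode \<delta> H S A sl n l m tb \<phi>p0 =
     fold (alg_step \<delta> H S A n l m tb) (alg_order H sl) (\<lambda>t s. 0, \<lambda>s t. 0, \<phi>p0)"

(* phi^+ at the start of episode k (initialised to 0 once).
   N k, L k, M k are the counts at the start of episode k; TB k the argmax rule used in episode k. *)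
fun phip_start :: "real \<Rightarrow> nat \<Rightarrow> nat \<Rightarrow> nat \<Rightarrow> nat list \<Rightarrow> (nat \<Rightarrow> nat \<Rightarrow> nat \<Rightarrow> nat)
     \<Rightarrow> (nat \<Rightarrow> nat \<Rightarrow> nat \<Rightarrow> real) \<Rightarrow> (nat \<Rightarrow> nat \<Rightarrow> nat \<Rightarrow> nat \<Rightarrow> nat)
     \<Rightarrow> (nat \<Rightarrow> nat \<Rightarrow> nat \<Rightarrow> (nat \<Rightarrow> real) \<Rightarrow> nat) \<Rightarrow> nat \<Rightarrow> ereal" where
  "phip_start \<delta> H S A sl N L M TB 0 = 0"
| "phip_start \<delta> H S A sl N L M TB (Suc k) =
     snd (snd (run_episode \<delta> H S A sl (N k) (L k) (M k) (TB k) (phip_start \<delta> H S A sl N L M TB k)))"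

definition Vtilde where
  "Vtilde \<delta> H S A sl N L M TB k =
     fst (run_episode \<delta> H S A sl (N k) (L k) (M k) (TB k) (phip_start \<delta> H S A sl N L M TB k))"

definition policy where
  "policy \<delta> H S A sl N L M TB k =
     fst (snd (run_episode \<delta> H S A sl (N k) (L k) (M k) (TB k) (phip_start \<delta> H S A sl N L M TB k)))"

(* optimal value with j steps to go: V*_t = Vopt (H+1-t); p indexed s' s a *)
fun Vopt :: "nat \<Rightarrow> nat \<Rightarrow> (nat \<Rightarrow> nat \<Rightarrow> real) \<Rightarrow> (nat \<Rightarrow> nat \<Rightarrow> nat \<Rightarrow> real) \<Rightarrow> nat \<Rightarrow> nat \<Rightarrow> real" where
  "Vopt S A r p 0 s = 0"
| "Vopt S A r p (Suc j) s = Max ((\<lambda>a. r s a + (\<Sum>s'<S. p s' s a * Vopt S A r p j s')) ` {..<A})"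

definition Vstar where
  "Vstar H S A r p t = Vopt S A r p (H + 1 - t)"

end

theory Submission
  imports Defs
begin


definition Xf :: "real \<Rightarrow> nat \<Rightarrow> nat \<Rightarrow> nat \<Rightarrow> nat \<Rightarrow> real" where
  "Xf \<delta> H S A n = 2 * ln (ln (max (exp 1) (real n))) + ln (27 * real H * real S * real A / \<delta>)"

lemma Xf_ge1:
  assumes "S \<ge> 1" "A \<ge> 1" "H \<ge> 1" "0 < \<delta>" "\<delta> < 1"
  shows "1 \<le> Xf \<delta> H S A n"
proof -
  have "1 \<le> ln (max (exp 1) (real n))"
    by (subst ln_ge_iff) (auto simp: less_max_iff_disj)
  hence a: "0 \<le> ln (ln (max (exp 1) (real n)))" by simp
  have "1 \<le> H * S * A" using assms by simp
  hence "1 \<le> real (H * S * A)" by linarith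
  hence "27 \<le> 27 * real H * real S * real A" by simp
  also have "\<dots> \<le> 27 * real H * real S * real A / \<delta>" using assms
    by (simp add: le_divide_eq)
  finally have b: "27 \<le> 27 * real H * real S * real A / \<delta>" .
  have "exp 1 \<le> (27::real)" using exp_le by linarith
  hence "1 \<le> ln (27 * real H * real S * real A / \<delta>)" using b
    by (subst ln_ge_iff) auto
  thus ?thesis using a unfolding Xf_def by simp
qed

lemma phi_Xf: "phi \<delta> H S A n = sqrt (Xf \<delta> H S A n / real n)"
  unfolding phi_def Xf_def by simp

lemma phi_nonneg:
  assumes "S \<ge> 1" "A \<ge> 1" "H \<ge> 1" "0 < \<delta>" "\<delta> < 1"
  shows "0 \<le> phi \<delta> H S A n"
  using Xf_ge1[OF assms, of n] unfolding phi_Xf by simp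

lemma Xf_mono:
  assumes "n \<le> n'"
  shows "Xf \<delta> H S A n \<le> Xf \<delta> H S A n'"
proof -
  have 1: "1 \<le> ln (max (exp 1) (real n))"
    by (subst ln_ge_iff) (auto simp: less_max_iff_disj)
  have "max (exp 1) (real n) \<le> max (exp 1) (real n')"
    using assms by (simp add: max_def)
  moreover have "0 < max (exp 1) (real n)" "0 < max (exp 1) (real n')" by (simp_all add: less_max_iff_disj)
  ultimately have "ln (max (exp 1) (real n)) \<le> ln (max (exp 1) (real n'))"
    by simp
  with 1 show ?thesis unfolding Xf_def by simp
qed

lemma maxV_bounds:
  assumes "S \<ge> 1" "\<forall>s'<S. 0 \<le> V s' \<and> V s' \<le> B"
  shows "0 \<le> maxV S V \<and> maxV S V \<le> B"
proof -
  have "0 \<in> {..<S}" using assms by simp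
  hence ne: "V ` {..<S} \<noteq> {}" by blast
  have "V 0 \<le> Max (V ` {..<S})" using assms by (intro Max_ge) auto
  moreover have "Max (V ` {..<S}) \<le> B" using assms ne by (subst Max_le_iff) auto
  moreover have "0 \<le> V 0" using assms by simp
  ultimately show ?thesis unfolding maxV_def by linarith
qed

lemma rng_nonneg:
  assumes "S \<ge> 1" shows "0 \<le> rng S V"
proof -
  have "0 \<in> {..<S}" using assms by simp
  hence ne: "V ` {..<S} \<noteq> {}" by blast
  have "Min (V ` {..<S}) \<le> V 0" using assms by (intro Min_le) auto
  moreover have "V 0 \<le> Max (V ` {..<S})" using assms by (intro Max_ge) auto
  ultimately have "Min (V ` {..<S}) \<le> Max (V ` {..<S})" by linarith
  thus ?thesis unfolding rng_def by simp
qed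

lemma c_bounds:
  assumes "S \<ge> 1" "t \<le> H" "\<phi>p \<ge> 0"
  shows "0 \<le> real_of_ereal (min (ereal (real H - real t)) (ereal (rng S V) + \<phi>p))
       \<and> real_of_ereal (min (ereal (real H - real t)) (ereal (rng S V) + \<phi>p)) \<le> real H"
proof -
  define x where "x = min (ereal (real H - real t)) (ereal (rng S V) + \<phi>p)"
  have r: "0 \<le> rng S V" using rng_nonneg assms by blast
  have "0 \<le> x" unfolding x_def using assms r by (simp add: add_nonneg_nonneg)
  moreover have "x \<le> ereal (real H - real t)" unfolding x_def by simp
  ultimately obtain y where "x = ereal y" "0 \<le> y" "y \<le> real H - real t"
    by (cases x) auto
  thus ?thesis unfolding x_def[symmetric] by simp
qed



lemma Qval_pos:
  assumes "0 < n s a"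
  shows "Qval \<delta> H S A n l m \<phi>p Vn t s a =
     min 1 (l s a / real (n s a) + phi \<delta> H S A (n s a))
     + min (maxV S Vn) ((\<Sum>s'<S. real (m s' s a) / real (n s a) * Vn s')
          + real_of_ereal (min (ereal (real H - real t)) (ereal (rng S Vn) + \<phi>p)) * phi \<delta> H S A (n s a))"
  using assms unfolding Qval_def Let_def by simp

lemma Q_bounds:
  assumes "S \<ge> 1" "A \<ge> 1" "H \<ge> 1" "0 < \<delta>" "\<delta> < 1" "t \<le> H" "\<phi>p \<ge> 0"
    "\<forall>s'<S. 0 \<le> Vn s' \<and> Vn s' \<le> B" "0 < n s a \<longrightarrow> 0 \<le> l s a"
  shows "0 \<le> Qval \<delta> H S A n l m \<phi>p Vn t s a \<and> Qval \<delta> H S A n l m \<phi>p Vn t s a \<le> 1 + B"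
proof (cases "n s a = 0")
  case True
  then show ?thesis using maxV_bounds[OF assms(1,8)] unfolding Qval_def by simp
next
  case False
  hence np: "0 < n s a" by simp
  define \<phi> where "\<phi> = phi \<delta> H S A (n s a)"
  define c where "c = real_of_ereal (min (ereal (real H - real t)) (ereal (rng S Vn) + \<phi>p))"
  have ph: "0 \<le> \<phi>" unfolding \<phi>_def using phi_nonneg assms(1-5) by blast
  have c: "0 \<le> c" unfolding c_def using c_bounds assms(1,6,7) by blast
  have mv: "0 \<le> maxV S Vn \<and> maxV S Vn \<le> B" using maxV_bounds[OF assms(1,8)] .
  have l: "0 \<le> l s a / real (n s a)" using assms(9) np by simp
  have sn: "0 \<le> (\<Sum>s'<S. real (m s' s a) / real (n s a) * Vn s')"
    using assms(8) by (intro sum_nonneg) auto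
  have e: "Qval \<delta> H S A n l m \<phi>p Vn t s a = min 1 (l s a / real (n s a) + \<phi>)
     + min (maxV S Vn) ((\<Sum>s'<S. real (m s' s a) / real (n s a) * Vn s') + c * \<phi>)"
    unfolding Qval_pos[where n=n and s=s and a=a, OF np] \<phi>_def c_def ..
  have "0 \<le> c * \<phi>" using c ph by simp
  show ?thesis unfolding e using mv l sn ph \<open>0 \<le> c * \<phi>\<close> by linarith
qed

lemma dev_bound:
  fixes q \<mu> Vn :: "nat \<Rightarrow> real"
  assumes "\<forall>s'<S. 0 \<le> Vn s' \<and> Vn s' \<le> B" "0 \<le> B"
    "(\<Sum>s'<S. \<bar>q s' - \<mu> s'\<bar>) \<le> e"
  shows "\<bar>(\<Sum>s'<S. q s' * Vn s') - (\<Sum>s'<S. \<mu> s' * Vn s')\<bar> \<le> e * B"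
proof -
  have "\<bar>(\<Sum>s'<S. q s' * Vn s') - (\<Sum>s'<S. \<mu> s' * Vn s')\<bar> = \<bar>\<Sum>s'<S. (q s' - \<mu> s') * Vn s'\<bar>"
  proof -
    have "(\<Sum>s'<S. (q s' - \<mu> s') * Vn s') = (\<Sum>s'<S. q s' * Vn s') - (\<Sum>s'<S. \<mu> s' * Vn s')"
      by (simp add: left_diff_distrib sum_subtractf)
    thus ?thesis by simp
  qed
  also have "\<dots> \<le> (\<Sum>s'<S. \<bar>(q s' - \<mu> s') * Vn s'\<bar>)" by (rule sum_abs)
  also have "\<dots> \<le> (\<Sum>s'<S. \<bar>q s' - \<mu> s'\<bar> * B)"
  proof (rule sum_mono)
    fix s' assume "s' \<in> {..<S}"
    hence "0 \<le> Vn s'" "Vn s' \<le> B" using assms(1) by auto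
    thus "\<bar>(q s' - \<mu> s') * Vn s'\<bar> \<le> \<bar>q s' - \<mu> s'\<bar> * B"
      by (simp add: abs_mult mult_left_mono)
  qed
  also have "\<dots> = (\<Sum>s'<S. \<bar>q s' - \<mu> s'\<bar>) * B" by (simp add: sum_distrib_right)
  also have "\<dots> \<le> e * B"
  proof -
    show ?thesis using assms(2,3) by (simp add: mult_right_mono)
  qed
  finally show ?thesis .
qed



lemma min_diff_le:
  fixes m x y :: real
  assumes "0 \<le> d" "x \<le> y + d"
  shows "min m x - min m y \<le> d"
  using assms by (simp add: min_def)

lemma Q_diff:
  fixes \<mu> Vn :: "nat \<Rightarrow> real"
  assumes "S \<ge> 1" "A \<ge> 1" "H \<ge> 1" "0 < \<delta>" "\<delta> < 1" "t \<le> H" "\<phi>p1 \<ge> 0" "\<phi>p2 \<ge> 0"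
    "\<forall>s'<S. 0 \<le> Vn s' \<and> Vn s' \<le> B" "0 \<le> B"
    "0 < n s1 a1" "0 < n s2 a2" "0 \<le> l s2 a2"
    "(\<Sum>s'<S. \<bar>real (m s' s1 a1) / real (n s1 a1) - \<mu> s'\<bar>) \<le> 4 * sqrt (real S) * phi \<delta> H S A (n s1 a1)"
    "(\<Sum>s'<S. \<bar>real (m s' s2 a2) / real (n s2 a2) - \<mu> s'\<bar>) \<le> 4 * sqrt (real S) * phi \<delta> H S A (n s2 a2)"
  shows "Qval \<delta> H S A n l m \<phi>p1 Vn t s1 a1 - Qval \<delta> H S A n l m \<phi>p2 Vn t s2 a2
     \<le> 1 + 4 * sqrt (real S) * B * phi \<delta> H S A (n s1 a1) + 4 * sqrt (real S) * B * phi \<delta> H S A (n s2 a2)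
        + real H * phi \<delta> H S A (n s1 a1)"
proof -
  define \<phi>1 where "\<phi>1 = phi \<delta> H S A (n s1 a1)"
  define \<phi>2 where "\<phi>2 = phi \<delta> H S A (n s2 a2)"
  define c1 where "c1 = real_of_ereal (min (ereal (real H - real t)) (ereal (rng S Vn) + \<phi>p1))"
  define c2 where "c2 = real_of_ereal (min (ereal (real H - real t)) (ereal (rng S Vn) + \<phi>p2))"
  define y1 where "y1 = (\<Sum>s'<S. real (m s' s1 a1) / real (n s1 a1) * Vn s')"
  define y2 where "y2 = (\<Sum>s'<S. real (m s' s2 a2) / real (n s2 a2) * Vn s')"
  define z where "z = (\<Sum>s'<S. \<mu> s' * Vn s')"
  have p1: "0 \<le> \<phi>1" unfolding \<phi>1_def using phi_nonneg assms(1-5) by blast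
  have p2: "0 \<le> \<phi>2" unfolding \<phi>2_def using phi_nonneg assms(1-5) by blast
  have c1: "0 \<le> c1 \<and> c1 \<le> real H" unfolding c1_def using c_bounds assms(1,6,7) by blast
  have c2: "0 \<le> c2" unfolding c2_def using c_bounds assms(1,6,8) by blast
  have d1: "\<bar>y1 - z\<bar> \<le> 4 * sqrt (real S) * \<phi>1 * B" unfolding y1_def z_def \<phi>1_def
    by (rule dev_bound[OF assms(9,10,14)])
  have d2: "\<bar>y2 - z\<bar> \<le> 4 * sqrt (real S) * \<phi>2 * B" unfolding y2_def z_def \<phi>2_def
    by (rule dev_bound[OF assms(9,10,15)])
  have e1: "Qval \<delta> H S A n l m \<phi>p1 Vn t s1 a1 = min 1 (l s1 a1 / real (n s1 a1) + \<phi>1)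
     + min (maxV S Vn) (y1 + c1 * \<phi>1)"
    unfolding Qval_pos[where n=n and s=s1 and a=a1, OF assms(11)] \<phi>1_def c1_def y1_def ..
  have e2: "Qval \<delta> H S A n l m \<phi>p2 Vn t s2 a2 = min 1 (l s2 a2 / real (n s2 a2) + \<phi>2)
     + min (maxV S Vn) (y2 + c2 * \<phi>2)"
    unfolding Qval_pos[where n=n and s=s2 and a=a2, OF assms(12)] \<phi>2_def c2_def y2_def ..
  have f1: "min 1 (l s1 a1 / real (n s1 a1) + \<phi>1) \<le> 1" by simp
  have f2: "0 \<le> min 1 (l s2 a2 / real (n s2 a2) + \<phi>2)" using assms(13) p2 by simp
  have cp1: "c1 * \<phi>1 \<le> real H * \<phi>1" using c1 p1 by (simp add: mult_right_mono)
  have cp2: "0 \<le> c2 * \<phi>2" using c2 p2 by simp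
  have "min (maxV S Vn) (y1 + c1 * \<phi>1) - min (maxV S Vn) (y2 + c2 * \<phi>2)
      \<le> 4 * sqrt (real S) * \<phi>1 * B + 4 * sqrt (real S) * \<phi>2 * B + real H * \<phi>1"
    apply (rule min_diff_le)
    using d1 d2 cp1 cp2 p1 p2 assms(10) by (auto simp: abs_le_iff)
  thus ?thesis unfolding e1 e2 \<phi>1_def[symmetric] \<phi>2_def[symmetric] using f1 f2
    by (simp add: algebra_simps)
qed



definition Inv :: "real \<Rightarrow> nat \<Rightarrow> nat \<Rightarrow> nat \<Rightarrow> (nat \<Rightarrow> nat \<Rightarrow> nat) \<Rightarrow> (nat \<Rightarrow> nat \<Rightarrow> real)
     \<Rightarrow> (nat \<Rightarrow> nat \<Rightarrow> nat \<Rightarrow> nat) \<Rightarrow> (nat \<times> nat) set \<Rightarrow> alg_state \<Rightarrow> bool" where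
  "Inv \<delta> H S A n l m D st = (case st of (V, \<pi>, \<phi>p) \<Rightarrow>
     (\<forall>x\<in>D. \<exists>\<phi>'\<ge>0. V (fst x) (snd x) = Qval \<delta> H S A n l m \<phi>' (V (fst x + 1)) (fst x) (snd x) (\<pi> (snd x) (fst x))
          \<and> \<pi> (snd x) (fst x) < A)
     \<and> \<phi>p \<ge> 0 \<and> (\<forall>s. V (H+1) s = 0))"

lemma Inv_step:
  assumes "Inv \<delta> H S A n l m D st" "\<forall>d\<in>D. fst x \<le> fst d \<and> x \<noteq> d" "fst x \<le> H"
    "\<forall>t s Q. tb t s Q < A"
  shows "Inv \<delta> H S A n l m (insert x D) (alg_step \<delta> H S A n l m tb x st)"
proof -
  obtain V \<pi> \<phi>p where st: "st = (V, \<pi>, \<phi>p)" by (cases st) auto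
  obtain t' s' where x: "x = (t', s')" by (cases x) auto
  define Q where "Q = Qval \<delta> H S A n l m \<phi>p (V (t'+1)) t' s'"
  define a where "a = tb t' s' Q"
  define V' where "V' = V(t' := (V t')(s' := Q a))"
  define \<pi>' where "\<pi>' = \<pi>(s' := (\<pi> s')(t' := a))"
  have as: "alg_step \<delta> H S A n l m tb x st = (V', \<pi>', max (phiE \<delta> H S A (n s' a)) \<phi>p)"
    unfolding alg_step_def st x V'_def \<pi>'_def a_def Q_def Let_def by simp
  have I: "\<forall>y\<in>D. \<exists>\<phi>'\<ge>0. V (fst y) (snd y) = Qval \<delta> H S A n l m \<phi>' (V (fst y + 1)) (fst y) (snd y) (\<pi> (snd y) (fst y))
          \<and> \<pi> (snd y) (fst y) < A" "\<phi>p \<ge> 0" "\<forall>s. V (H+1) s = 0"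
    using assms(1) unfolding Inv_def st by auto
  have V'1: "V' (t'+1) = V (t'+1)" unfolding V'_def by simp
  have new: "\<exists>\<phi>'\<ge>0. V' t' s' = Qval \<delta> H S A n l m \<phi>' (V' (t' + 1)) t' s' (\<pi>' s' t') \<and> \<pi>' s' t' < A"
    using I(2) assms(4) unfolding V'1 by (intro exI[of _ \<phi>p]) (simp add: V'_def \<pi>'_def Q_def a_def)
  have old: "\<exists>\<phi>'\<ge>0. V' (fst y) (snd y) = Qval \<delta> H S A n l m \<phi>' (V' (fst y + 1)) (fst y) (snd y) (\<pi>' (snd y) (fst y))
          \<and> \<pi>' (snd y) (fst y) < A" if y: "y \<in> D" for y
  proof -
    obtain t s where yy: "y = (t, s)" by (cases y) auto
    have ne: "(t', s') \<noteq> (t, s)" "t' \<le> t" using assms(2) y unfolding x yy by auto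
    have "V' t s = V t s" unfolding V'_def using ne(1) by auto
    moreover have "V' (t+1) = V (t+1)" unfolding V'_def using ne(2) by auto
    moreover have "\<pi>' s t = \<pi> s t" unfolding \<pi>'_def using ne(1) by auto
    moreover have "\<exists>\<phi>'\<ge>0. V t s = Qval \<delta> H S A n l m \<phi>' (V (t + 1)) t s (\<pi> s t) \<and> \<pi> s t < A"
      using bspec[OF I(1) y] unfolding yy by simp
    ultimately show ?thesis unfolding yy by simp
  qed
  have "\<forall>s. V' (H+1) s = 0" using I(3) assms(3) unfolding V'_def x by auto
  moreover have "max (phiE \<delta> H S A (n s' a)) \<phi>p \<ge> 0" using I(2) by (simp add: le_max_iff_disj)
  ultimately show ?thesis unfolding Inv_def as using new old x by auto
qed

lemma Inv_fold:
  assumes "Inv \<delta> H S A n l m D st" "\<forall>d\<in>D. \<forall>x\<in>set xs. fst x \<le> fst d \<and> x \<noteq> d"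
    "sorted_wrt (\<lambda>x y. fst y \<le> fst x) xs" "distinct xs" "\<forall>x\<in>set xs. fst x \<le> H"
    "\<forall>t s Q. tb t s Q < A"
  shows "Inv \<delta> H S A n l m (D \<union> set xs) (fold (alg_step \<delta> H S A n l m tb) xs st)"
  using assms
proof (induction xs arbitrary: D st)
  case Nil
  then show ?case by simp
next
  case (Cons x xs)
  have "Inv \<delta> H S A n l m (insert x D) (alg_step \<delta> H S A n l m tb x st)"
    using Cons.prems by (intro Inv_step) auto
  moreover have "\<forall>d\<in>insert x D. \<forall>y\<in>set xs. fst y \<le> fst d \<and> y \<noteq> d"
    using Cons.prems by auto
  ultimately have "Inv \<delta> H S A n l m (insert x D \<union> set xs) (fold (alg_step \<delta> H S A n l m tb) xs (alg_step \<delta> H S A n l m tb x st))"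
    using Cons.prems by (intro Cons.IH) auto
  thus ?case by simp
qed

lemma sorted_concat_aux:
  "sorted_wrt (\<lambda>a b. b \<le> a) ts \<Longrightarrow>
   sorted_wrt (\<lambda>x y. fst y \<le> fst x) (concat (map (\<lambda>t. map (\<lambda>s. (t, s)) sl) (ts::nat list)))"
proof (induction ts)
  case Nil then show ?case by simp
next
  case (Cons t ts)
  then show ?case by (auto simp: sorted_wrt_append sorted_wrt_map)
qed

lemma alg_order_props:
  assumes "distinct sl"
  shows "distinct (alg_order H sl)" "sorted_wrt (\<lambda>x y. fst y \<le> fst x) (alg_order H sl)"
    "set (alg_order H sl) = {1..H} \<times> set sl"
proof -
  show "set (alg_order H sl) = {1..H} \<times> set sl" unfolding alg_order_def by auto
  show "distinct (alg_order H sl)"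
  proof (cases "sl = []")
    case True
    have "\<And>xs::nat list. concat (map (\<lambda>t. ([]::(nat\<times>nat) list)) xs) = []"
      subgoal for xs by (induction xs) auto done
    note cm = this
    show ?thesis unfolding alg_order_def True list.map(1) by (subst cm) simp
  next
    case False
    then obtain a r where sl: "sl = a # r" by (cases sl) auto
    show ?thesis unfolding alg_order_def using assms
      by (intro distinct_concat) (auto simp: distinct_map inj_on_def sl)
  qed
  show "sorted_wrt (\<lambda>x y. fst y \<le> fst x) (alg_order H sl)" unfolding alg_order_def
    by (rule sorted_concat_aux) (simp add: sorted_wrt_rev del: upt_Suc)
qed

lemma run_Inv:
  assumes "distinct sl" "\<phi>p0 \<ge> 0" "\<forall>t s Q. tb t s Q < A"
  shows "Inv \<delta> H S A n l m ({1..H} \<times> set sl) (run_episode \<delta> H S A sl n l m tb \<phi>p0)"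
proof -
  have "Inv \<delta> H S A n l m ({} \<union> set (alg_order H sl)) (fold (alg_step \<delta> H S A n l m tb) (alg_order H sl) (\<lambda>t s. 0, \<lambda>s t. 0, \<phi>p0))"
    using alg_order_props[OF assms(1), of H] assms(2,3)
    by (intro Inv_fold) (auto simp: Inv_def)
  thus ?thesis unfolding run_episode_def using alg_order_props[OF assms(1), of H] by simp
qed



lemma Inv_run_unfold:
  assumes "Inv \<delta> H S A n l m D st"
  shows "(\<forall>x\<in>D. \<exists>\<phi>'\<ge>0. fst st (fst x) (snd x) = Qval \<delta> H S A n l m \<phi>' (fst st (fst x + 1)) (fst x) (snd x) (fst (snd st) (snd x) (fst x))
          \<and> fst (snd st) (snd x) (fst x) < A)
     \<and> snd (snd st) \<ge> 0 \<and> (\<forall>s. fst st (H+1) s = 0)"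
  using assms unfolding Inv_def by (cases st) auto

lemma phip_nonneg:
  assumes "distinct sl" "\<forall>j t s Q. TB j t s Q < A"
  shows "phip_start \<delta> H S A sl N L M TB k \<ge> 0"
proof (induction k)
  case 0 then show ?case by simp
next
  case (Suc k)
  have "\<forall>t s Q. TB k t s Q < A" using assms(2) by blast
  from Inv_run_unfold[OF run_Inv[OF assms(1) Suc this]] show ?case by simp
qed

lemma episode_facts:
  assumes "distinct sl" "set sl = {..<S}" "\<forall>j t s Q. TB j t s Q < A"
  shows "\<forall>t\<in>{1..H}. \<forall>s<S. \<exists>\<phi>'\<ge>0. Vtilde \<delta> H S A sl N L M TB k t s
            = Qval \<delta> H S A (N k) (L k) (M k) \<phi>' (Vtilde \<delta> H S A sl N L M TB k (t+1)) t s (policy \<delta> H S A sl N L M TB k s t)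
          \<and> policy \<delta> H S A sl N L M TB k s t < A"
    "\<forall>s. Vtilde \<delta> H S A sl N L M TB k (H+1) s = 0"
proof -
  have "\<forall>t s Q. TB k t s Q < A" using assms(3) by blast
  note U = Inv_run_unfold[OF run_Inv[OF assms(1) phip_nonneg[OF assms(1,3)] this]]
  show "\<forall>s. Vtilde \<delta> H S A sl N L M TB k (H+1) s = 0" using U unfolding Vtilde_def by blast
  show "\<forall>t\<in>{1..H}. \<forall>s<S. \<exists>\<phi>'\<ge>0. Vtilde \<delta> H S A sl N L M TB k t s
            = Qval \<delta> H S A (N k) (L k) (M k) \<phi>' (Vtilde \<delta> H S A sl N L M TB k (t+1)) t s (policy \<delta> H S A sl N L M TB k s t)
          \<and> policy \<delta> H S A sl N L M TB k s t < A"
  proof (intro ballI allI impI)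
    fix t s assume "t \<in> {1..H}" "s < S"
    hence "(t, s) \<in> {1..H} \<times> set sl" using assms(2) by auto
    from bspec[OF conjunct1[OF U] this]
    show "\<exists>\<phi>'\<ge>0. Vtilde \<delta> H S A sl N L M TB k t s
            = Qval \<delta> H S A (N k) (L k) (M k) \<phi>' (Vtilde \<delta> H S A sl N L M TB k (t+1)) t s (policy \<delta> H S A sl N L M TB k s t)
          \<and> policy \<delta> H S A sl N L M TB k s t < A"
      unfolding Vtilde_def policy_def by simp
  qed
qed



lemma V_bounds:
  assumes "S \<ge> 1" "A \<ge> 1" "H \<ge> 1" "0 < \<delta>" "\<delta> < 1"
    "\<forall>t\<in>{1..H}. \<forall>s<S. \<exists>\<phi>'\<ge>0. V t s = Qval \<delta> H S A n l m \<phi>' (V (t+1)) t s (\<pi> s t) \<and> \<pi> s t < A"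
    "\<forall>s. V (H+1) s = 0"
    "\<forall>s<S. \<forall>a<A. 0 \<le> l s a"
  shows "j \<le> H \<Longrightarrow> \<forall>s<S. 0 \<le> V (H+1-j) s \<and> V (H+1-j) s \<le> real j"
proof (induction j)
  case 0 then show ?case using assms(7) by simp
next
  case (Suc j)
  define t where "t = H - j"
  have t: "t \<in> {1..H}" "H + 1 - j = t + 1" "H + 1 - Suc j = t" using Suc.prems unfolding t_def by auto
  have B: "\<forall>s'<S. 0 \<le> V (t+1) s' \<and> V (t+1) s' \<le> real j" using Suc t by simp
  show ?case
  proof (intro allI impI)
    fix s assume s: "s < S"
    obtain \<phi>' where p: "\<phi>' \<ge> 0" "V t s = Qval \<delta> H S A n l m \<phi>' (V (t+1)) t s (\<pi> s t)" "\<pi> s t < A"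
      using assms(6) t(1) s by blast
    have "0 \<le> Qval \<delta> H S A n l m \<phi>' (V (t+1)) t s (\<pi> s t) \<and> Qval \<delta> H S A n l m \<phi>' (V (t+1)) t s (\<pi> s t) \<le> 1 + real j"
      using assms(8) s p(3) t(1) by (intro Q_bounds[OF assms(1-5) _ p(1) B]) auto
    thus "0 \<le> V (H + 1 - Suc j) s \<and> V (H + 1 - Suc j) s \<le> real (Suc j)" using p(2) t(3) by simp
  qed
qed

lemma phi_le:
  assumes "S \<ge> 1" "A \<ge> 1" "H \<ge> 1" "0 < \<delta>" "\<delta> < 1" "0 < nmin" "nmin \<le> n0" "n0 \<le> Nmax"
  shows "phi \<delta> H S A n0 \<le> Xf \<delta> H S A Nmax / sqrt (real nmin)"
proof -
  have X1: "1 \<le> Xf \<delta> H S A Nmax" using Xf_ge1[OF assms(1-5)] .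
  have "Xf \<delta> H S A n0 \<le> Xf \<delta> H S A Nmax" using Xf_mono assms(8) .
  moreover have "0 \<le> Xf \<delta> H S A n0" using Xf_ge1[OF assms(1-5), of n0] by simp
  ultimately have "Xf \<delta> H S A n0 / real n0 \<le> Xf \<delta> H S A Nmax / real nmin"
    using assms(6,7) by (intro frac_le) auto
  hence "phi \<delta> H S A n0 \<le> sqrt (Xf \<delta> H S A Nmax / real nmin)" unfolding phi_Xf
    by (rule real_sqrt_le_mono)
  also have "\<dots> = sqrt (Xf \<delta> H S A Nmax) / sqrt (real nmin)" by (simp add: real_sqrt_divide)
  also have "\<dots> \<le> Xf \<delta> H S A Nmax / sqrt (real nmin)"
  proof -
    have "sqrt (Xf \<delta> H S A Nmax) \<le> Xf \<delta> H S A Nmax"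
    proof -
      have s1: "1 \<le> sqrt (Xf \<delta> H S A Nmax)" using X1 by simp
      have "sqrt (Xf \<delta> H S A Nmax) * 1 \<le> sqrt (Xf \<delta> H S A Nmax) * sqrt (Xf \<delta> H S A Nmax)"
        using s1 by (intro mult_left_mono) auto
      also have "\<dots> = Xf \<delta> H S A Nmax" using X1 by simp
      finally show ?thesis by simp
    qed
    thus ?thesis by (simp add: divide_right_mono)
  qed
  finally show ?thesis .
qed



lemma rng_bound:
  fixes \<mu> :: "nat \<Rightarrow> real"
  assumes "S \<ge> 1" "A \<ge> 1" "H \<ge> 1" "0 < \<delta>" "\<delta> < 1"
    "\<forall>t\<in>{1..H}. \<forall>s<S. \<exists>\<phi>'\<ge>0. V t s = Qval \<delta> H S A n l m \<phi>' (V (t+1)) t s (\<pi> s t) \<and> \<pi> s t < A"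
    "\<forall>s. V (H+1) s = 0"
    "\<forall>s<S. \<forall>a<A. 0 \<le> l s a"
    "t \<in> {1..H}"
    "\<forall>s<S. 0 < n s (\<pi> s t)"
    "\<forall>s<S. \<forall>a<A. 0 < n s a \<longrightarrow> (\<Sum>s'<S. \<bar>real (m s' s a) / real (n s a) - \<mu> s'\<bar>) \<le> 4 * sqrt (real S) * phi \<delta> H S A (n s a)"
    "0 < nmin" "\<forall>s<S. nmin \<le> n s (\<pi> s t)" "\<forall>s<S. n s (\<pi> s t) \<le> Nmax"
  shows "rng S (V t) \<le> 1 + 9 * Xf \<delta> H S A Nmax * real H * sqrt (real S) / sqrt (real nmin)"
proof -
  have VB: "\<forall>s<S. 0 \<le> V (H+1-(H-t)) s \<and> V (H+1-(H-t)) s \<le> real (H-t)"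
    by (rule V_bounds[OF assms(1-8)]) simp
  have "H + 1 - (H - t) = t + 1" using assms(9) by auto
  hence B: "\<forall>s'<S. 0 \<le> V (t+1) s' \<and> V (t+1) s' \<le> real H" using VB by fastforce
  have ne: "V t ` {..<S} \<noteq> {}" using assms(1) by (metis empty_iff image_is_empty lessThan_iff zero_less_iff_neq_zero less_le_trans zero_less_one)
  obtain s1 where s1: "s1 < S" "V t s1 = Max (V t ` {..<S})"
    using Max_in[OF _ ne] by auto
  obtain s2 where s2: "s2 < S" "V t s2 = Min (V t ` {..<S})"
    using Min_in[OF _ ne] by auto
  obtain p1 where p1: "p1 \<ge> 0" "V t s1 = Qval \<delta> H S A n l m p1 (V (t+1)) t s1 (\<pi> s1 t)" "\<pi> s1 t < A"
    using assms(6,9) s1(1) by blast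
  obtain p2 where p2: "p2 \<ge> 0" "V t s2 = Qval \<delta> H S A n l m p2 (V (t+1)) t s2 (\<pi> s2 t)" "\<pi> s2 t < A"
    using assms(6,9) s2(1) by blast
  define R where "R = Xf \<delta> H S A Nmax / sqrt (real nmin)"
  define f1 where "f1 = phi \<delta> H S A (n s1 (\<pi> s1 t))"
  define f2 where "f2 = phi \<delta> H S A (n s2 (\<pi> s2 t))"
  have r1: "f1 \<le> R" unfolding f1_def R_def using assms s1(1)
    by (intro phi_le[OF assms(1-5) assms(12)]) auto
  have r2: "f2 \<le> R" unfolding f2_def R_def using assms s2(1)
    by (intro phi_le[OF assms(1-5) assms(12)]) auto
  have f1p: "0 \<le> f1" unfolding f1_def using phi_nonneg[OF assms(1-5)] by blast
  have f2p: "0 \<le> f2" unfolding f2_def using phi_nonneg[OF assms(1-5)] by blast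
  have "V t s1 - V t s2 \<le> 1 + 4 * sqrt (real S) * real H * f1 + 4 * sqrt (real S) * real H * f2 + real H * f1"
    unfolding p1(2) p2(2) f1_def f2_def
    using assms(1-5) assms(9) p1(1) p2(1) B assms(10) s1(1) s2(1) assms(8) p2(3) p1(3) assms(11)
    by (intro Q_diff[where \<mu>=\<mu>]) auto
  also have "\<dots> \<le> 1 + 4 * sqrt (real S) * real H * R + 4 * sqrt (real S) * real H * R + real H * R"
  proof -
    have c: "0 \<le> 4 * sqrt (real S) * real H" by simp
    have "4 * sqrt (real S) * real H * f1 \<le> 4 * sqrt (real S) * real H * R" using mult_left_mono[OF r1 c] .
    moreover have "4 * sqrt (real S) * real H * f2 \<le> 4 * sqrt (real S) * real H * R" using mult_left_mono[OF r2 c] .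
    moreover have "real H * f1 \<le> real H * R" using r1 by (simp add: mult_left_mono)
    ultimately show ?thesis by linarith
  qed
  also have "\<dots> \<le> 1 + 9 * sqrt (real S) * real H * R"
  proof -
    have "0 \<le> R" using r1 f1p by linarith
    hence "real H * R * 1 \<le> real H * R * sqrt (real S)" using assms(1) by (intro mult_left_mono) auto
    thus ?thesis by (simp add: algebra_simps)
  qed
  also have "\<dots> = 1 + 9 * Xf \<delta> H S A Nmax * real H * sqrt (real S) / sqrt (real nmin)"
    unfolding R_def by simp
  finally show ?thesis unfolding rng_def using s1 s2 by simp
qed



theorem lemma1:
  shows "\<exists>C::real. C > 0 \<and>
    (\<forall>(S::nat) (A::nat) (H::nat) (\<delta>::real) (\<mu>::nat \<Rightarrow> real) (p::nat \<Rightarrow> nat \<Rightarrow> nat \<Rightarrow> real)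
      (r::nat \<Rightarrow> nat \<Rightarrow> real) (sl::nat list)
      (N::nat \<Rightarrow> nat \<Rightarrow> nat \<Rightarrow> nat) (L::nat \<Rightarrow> nat \<Rightarrow> nat \<Rightarrow> real) (M::nat \<Rightarrow> nat \<Rightarrow> nat \<Rightarrow> nat \<Rightarrow> nat)
      (TB::nat \<Rightarrow> nat \<Rightarrow> nat \<Rightarrow> (nat \<Rightarrow> real) \<Rightarrow> nat) (k::nat) (t::nat).
      S \<ge> 1 \<and> A \<ge> 1 \<and> H \<ge> 1 \<and> 0 < \<delta> \<and> \<delta> < 1
      \<comment> \<open>state processing order within a timestep: any enumeration of the states\<close>
      \<and> distinct sl \<and> set sl = {..<S}
      \<comment> \<open>contextual bandit: p(s'|s,a) = mu(s'), mu a distribution\<close>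
      \<and> (\<forall>s'<S. 0 \<le> \<mu> s') \<and> (\<Sum>s'<S. \<mu> s') = 1
      \<and> (\<forall>s'<S. \<forall>s<S. \<forall>a<A. p s' s a = \<mu> s')
      \<and> (\<forall>s<S. \<forall>a<A. 0 \<le> r s a \<and> r s a \<le> 1)
      \<comment> \<open>the argmax rule returns a maximiser over the actions\<close>
      \<and> (\<forall>j t' s Q. TB j t' s Q < A \<and> (\<forall>a<A. Q a \<le> Q (TB j t' s Q)))
      \<comment> \<open>basic consistency of the counts (observed rewards in [0,1])\<close>
      \<and> (\<forall>j. \<forall>s<S. \<forall>a<A. 0 \<le> L j s a \<and> L j s a \<le> real (N j s a) \<and> (\<Sum>s'<S. M j s' s a) = N j s a)
      \<comment> \<open>outside the failure event\<close>
      \<and> (\<forall>j. \<forall>s<S. \<forall>a<A. N j s a > 0 \<longrightarrow>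
            \<bar>L j s a / real (N j s a) - r s a\<bar> \<le> phi \<delta> H S A (N j s a)
          \<and> (\<forall>t'\<in>{1..H}. \<bar>\<Sum>s'<S. (real (M j s' s a) / real (N j s a) - p s' s a) * Vstar H S A r p (t'+1) s'\<bar>
                 \<le> rng S (Vstar H S A r p (t'+1)) * phi \<delta> H S A (N j s a))
          \<and> (\<Sum>s'<S. \<bar>real (M j s' s a) / real (N j s a) - p s' s a\<bar>) \<le> 4 * sqrt (real S) * phi \<delta> H S A (N j s a))
      \<and> t \<in> {1..H}
      \<comment> \<open>the minimum count is positive (otherwise the bound is infinite)\<close>
      \<and> (\<forall>s'<S. \<forall>t'\<in>{1..H}. N k s' (policy \<delta> H S A sl N L M TB k s' t') > 0)
      \<longrightarrow>
      rng S (Vtilde \<delta> H S A sl N L M TB k t)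
        \<le> 1 + C * (2 * ln (ln (max (exp 1) (real (Max {N k s a |s a. s < S \<and> a < A}))))
                      + ln (27 * real H * real S * real A / \<delta>))
              * real H * sqrt (real S)
              / sqrt (real (Min {N k s' (policy \<delta> H S A sl N L M TB k s' t') |s' t'. s' < S \<and> t' \<in> {1..H}})))"
proof (intro exI[of _ "9::real"] conjI allI impI)
  show "(0::real) < 9" by simp
next
  fix S A H :: nat and \<delta> :: real and \<mu> :: "nat \<Rightarrow> real" and p :: "nat \<Rightarrow> nat \<Rightarrow> nat \<Rightarrow> real"
    and r :: "nat \<Rightarrow> nat \<Rightarrow> real" and sl :: "nat list" and N :: "nat \<Rightarrow> nat \<Rightarrow> nat \<Rightarrow> nat"
    and L :: "nat \<Rightarrow> nat \<Rightarrow> nat \<Rightarrow> real" and M :: "nat \<Rightarrow> nat \<Rightarrow> nat \<Rightarrow> nat \<Rightarrow> nat"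
    and TB :: "nat \<Rightarrow> nat \<Rightarrow> nat \<Rightarrow> (nat \<Rightarrow> real) \<Rightarrow> nat" and k t :: nat
  assume hyp: "S \<ge> 1 \<and> A \<ge> 1 \<and> H \<ge> 1 \<and> 0 < \<delta> \<and> \<delta> < 1
      \<and> distinct sl \<and> set sl = {..<S}
      \<and> (\<forall>s'<S. 0 \<le> \<mu> s') \<and> (\<Sum>s'<S. \<mu> s') = 1
      \<and> (\<forall>s'<S. \<forall>s<S. \<forall>a<A. p s' s a = \<mu> s')
      \<and> (\<forall>s<S. \<forall>a<A. 0 \<le> r s a \<and> r s a \<le> 1)
      \<and> (\<forall>j t' s Q. TB j t' s Q < A \<and> (\<forall>a<A. Q a \<le> Q (TB j t' s Q)))
      \<and> (\<forall>j. \<forall>s<S. \<forall>a<A. 0 \<le> L j s a \<and> L j s a \<le> real (N j s a) \<and> (\<Sum>s'<S. M j s' s a) = N j s a)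
      \<and> (\<forall>j. \<forall>s<S. \<forall>a<A. N j s a > 0 \<longrightarrow>
            \<bar>L j s a / real (N j s a) - r s a\<bar> \<le> phi \<delta> H S A (N j s a)
          \<and> (\<forall>t'\<in>{1..H}. \<bar>\<Sum>s'<S. (real (M j s' s a) / real (N j s a) - p s' s a) * Vstar H S A r p (t'+1) s'\<bar>
                 \<le> rng S (Vstar H S A r p (t'+1)) * phi \<delta> H S A (N j s a))
          \<and> (\<Sum>s'<S. \<bar>real (M j s' s a) / real (N j s a) - p s' s a\<bar>) \<le> 4 * sqrt (real S) * phi \<delta> H S A (N j s a))
      \<and> t \<in> {1..H}
      \<and> (\<forall>s'<S. \<forall>t'\<in>{1..H}. N k s' (policy \<delta> H S A sl N L M TB k s' t') > 0)"
  hence h: "S \<ge> 1" "A \<ge> 1" "H \<ge> 1" "0 < \<delta>" "\<delta> < 1" "distinct sl" "set sl = {..<S}"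
    "\<forall>s'<S. \<forall>s<S. \<forall>a<A. p s' s a = \<mu> s'"
    "\<forall>j t' s Q. TB j t' s Q < A"
    "\<forall>j. \<forall>s<S. \<forall>a<A. 0 \<le> L j s a"
    "\<forall>j. \<forall>s<S. \<forall>a<A. N j s a > 0 \<longrightarrow>
          (\<Sum>s'<S. \<bar>real (M j s' s a) / real (N j s a) - p s' s a\<bar>) \<le> 4 * sqrt (real S) * phi \<delta> H S A (N j s a)"
    "t \<in> {1..H}"
    "\<forall>s'<S. \<forall>t'\<in>{1..H}. N k s' (policy \<delta> H S A sl N L M TB k s' t') > 0"
    by auto
  define V where "V = Vtilde \<delta> H S A sl N L M TB k"
  define \<pi> where "\<pi> = policy \<delta> H S A sl N L M TB k"
  define nmin where "nmin = Min {N k s' (policy \<delta> H S A sl N L M TB k s' t') |s' t'. s' < S \<and> t' \<in> {1..H}}"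
  define Nmax where "Nmax = Max {N k s a |s a. s < S \<and> a < A}"
  note EF = episode_facts[OF h(6,7,9), where \<delta>=\<delta> and H=H and N=N and L=L and M=M and k=k]
  have F1: "\<forall>t\<in>{1..H}. \<forall>s<S. \<exists>\<phi>'\<ge>0. V t s = Qval \<delta> H S A (N k) (L k) (M k) \<phi>' (V (t+1)) t s (\<pi> s t) \<and> \<pi> s t < A"
    using EF(1) unfolding V_def \<pi>_def .
  have F2: "\<forall>s. V (H+1) s = 0" using EF(2) unfolding V_def .
  have Lk: "\<forall>s<S. \<forall>a<A. 0 \<le> L k s a" using h(10) by blast
  have pos: "\<forall>s<S. 0 < N k s (\<pi> s t)" using h(12,13) unfolding \<pi>_def by blast
  have fail: "\<forall>s<S. \<forall>a<A. 0 < N k s a \<longrightarrow> (\<Sum>s'<S. \<bar>real (M k s' s a) / real (N k s a) - \<mu> s'\<bar>) \<le> 4 * sqrt (real S) * phi \<delta> H S A (N k s a)"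
  proof (intro allI impI)
    fix s a assume sa: "s < S" "a < A" "0 < N k s a"
    have "(\<Sum>s'<S. \<bar>real (M k s' s a) / real (N k s a) - \<mu> s'\<bar>) = (\<Sum>s'<S. \<bar>real (M k s' s a) / real (N k s a) - p s' s a\<bar>)"
      using h(8) sa by (intro sum.cong) auto
    thus "(\<Sum>s'<S. \<bar>real (M k s' s a) / real (N k s a) - \<mu> s'\<bar>) \<le> 4 * sqrt (real S) * phi \<delta> H S A (N k s a)"
      using h(11) sa by auto
  qed
  have fin1: "finite {N k s' (policy \<delta> H S A sl N L M TB k s' t') |s' t'. s' < S \<and> t' \<in> {1..H}}"
    by (rule finite_image_set2) auto
  have fin2: "finite {N k s a |s a. s < S \<and> a < A}"
    by (rule finite_image_set2) auto
  have mem1: "N k s (\<pi> s t) \<in> {N k s' (policy \<delta> H S A sl N L M TB k s' t') |s' t'. s' < S \<and> t' \<in> {1..H}}"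
    if "s < S" for s using that h(12) unfolding \<pi>_def by blast
  have pi_lt: "\<pi> s t < A" if "s < S" for s using F1 h(12) that by blast
  have mem2: "N k s (\<pi> s t) \<in> {N k s a |s a. s < S \<and> a < A}" if "s < S" for s
    using that pi_lt[OF that] by blast
  have nmin_le: "\<forall>s<S. nmin \<le> N k s (\<pi> s t)" unfolding nmin_def using Min_le[OF fin1 mem1] by blast
  have Nmax_ge: "\<forall>s<S. N k s (\<pi> s t) \<le> Nmax" unfolding Nmax_def using Max_ge[OF fin2 mem2] by blast
  have nmin_pos: "0 < nmin"
  proof -
    have "{N k s' (policy \<delta> H S A sl N L M TB k s' t') |s' t'. s' < S \<and> t' \<in> {1..H}} \<noteq> {}"
      using mem1[of 0] h(1) by auto
    from Min_in[OF fin1 this] obtain s' t' where "nmin = N k s' (policy \<delta> H S A sl N L M TB k s' t')"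
       "s' < S" "t' \<in> {1..H}" unfolding nmin_def by blast
    thus ?thesis using h(13) by simp
  qed
  have "rng S (V t) \<le> 1 + 9 * Xf \<delta> H S A Nmax * real H * sqrt (real S) / sqrt (real nmin)"
    by (rule rng_bound[OF h(1-5) F1 F2 Lk h(12) pos fail nmin_pos nmin_le Nmax_ge])
  thus "rng S (Vtilde \<delta> H S A sl N L M TB k t)
        \<le> 1 + 9 * (2 * ln (ln (max (exp 1) (real (Max {N k s a |s a. s < S \<and> a < A}))))
                      + ln (27 * real H * real S * real A / \<delta>))
              * real H * sqrt (real S)
              / sqrt (real (Min {N k s' (policy \<delta> H S A sl N L M TB k s' t') |s' t'. s' < S \<and> t' \<in> {1..H}}))"
    unfolding V_def Xf_def Nmax_def nmin_def .
qed

end
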